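(* Let $n\geq 1$ and let $C$ be a $2$-null CRC in $G_n$ with covering radius $\rho\geq 2$, $c_1=1$ and $c_2=2$. Then there is a CRC $D$ in the binary Hamming graph $H(2n,2)$ with the same parameter matrix as $C$ such that $C=\{x\in\mathbb{Z}^n: (\tau(x_1 \bmod 4),\ldots,\tau(x_n\bmod 4))\in D\}$. In particular, $C$ is invariant under translation by $4e_i$ for every $i$.
   Context: $G_n$ is the graph with vertex set $\mathbb{Z}^n$, $x\sim y$ iff $\sum_i|x_i-y_i|=1$; $e_i$ is the $i$-th unit vector. For a code $C$ with covering radius $\rho=\max_v d(v,C)$, $C_i=\{v:d(v,C)=i\}$. $C$ is a completely regular code (CRC) if for all $i,j$ every vertex of $C_i$ has the same number $\alpha_{ij}$ of neighbours in $C_j$, with $\alpha_{ij}=0$ for $|i-j|>1$; $a_i=\alpha_{ii}$, $b_i=\alpha_{i,i+1}$, $c_i=\alpha_{i,i-1}$, and the parameter matrix is $(\alpha_{ij})$. $C$ is $r$-null if $a_0=\cdots=a_{r-1}=0$. The same notions apply in any graph, e.g. in the Hamming graph $H(2n,2)$ on $\{0,1\}^{2n}$ (adjacent iff differing in exactly one coordinate). $\tau:\{0,1,2,3\}\to\{0,1\}^2$ is the Gray map $\tau(0)=(00)$, $\tau(1)=(10)$, $\tau(2)=(11)$, $\tau(3)=(01)$, and $(\tau(y_1),\ldots,\tau(y_n))$ denotes the concatenation in $\{0,1\}^{2n}$. *)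

theory Defs
  imports Main
begin

definition adjV :: "'v set \<Rightarrow> ('v \<Rightarrow> 'v \<Rightarrow> bool) \<Rightarrow> 'v \<Rightarrow> 'v \<Rightarrow> bool" where
  "adjV V adj x y \<longleftrightarrow> x \<in> V \<and> y \<in> V \<and> adj x y"

definition dist_code :: "'v set \<Rightarrow> ('v \<Rightarrow> 'v \<Rightarrow> bool) \<Rightarrow> 'v set \<Rightarrow> 'v \<Rightarrow> nat" where
  "dist_code V adj C v = (LEAST k. \<exists>c\<in>C. (adjV V adj ^^ k) v c)"

definition nbrs_in :: "'v set \<Rightarrow> ('v \<Rightarrow> 'v \<Rightarrow> bool) \<Rightarrow> 'v \<Rightarrow> 'v set \<Rightarrow> 'v set" where
  "nbrs_in V adj v S = {w \<in> V. adjV V adj v w \<and> w \<in> S}"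

definition layer :: "'v set \<Rightarrow> ('v \<Rightarrow> 'v \<Rightarrow> bool) \<Rightarrow> 'v set \<Rightarrow> nat \<Rightarrow> 'v set" where
  "layer V adj C i = {v \<in> V. dist_code V adj C v = i}"

definition covering_radius_is :: "'v set \<Rightarrow> ('v \<Rightarrow> 'v \<Rightarrow> bool) \<Rightarrow> 'v set \<Rightarrow> nat \<Rightarrow> bool" where
  "covering_radius_is V adj C \<rho> \<longleftrightarrow>
     (\<forall>v\<in>V. (\<exists>k. \<exists>c\<in>C. (adjV V adj ^^ k) v c) \<and> dist_code V adj C v \<le> \<rho>) \<and>
     (\<exists>v\<in>V. dist_code V adj C v = \<rho>)"

definition CRC :: "'v set \<Rightarrow> ('v \<Rightarrow> 'v \<Rightarrow> bool) \<Rightarrow> 'v set \<Rightarrow> nat \<Rightarrow> (nat \<Rightarrow> nat \<Rightarrow> nat) \<Rightarrow> bool" where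
  "CRC V adj C \<rho> \<alpha> \<longleftrightarrow>
     C \<subseteq> V \<and> C \<noteq> {} \<and> covering_radius_is V adj C \<rho> \<and>
     (\<forall>i\<le>\<rho>. \<forall>j\<le>\<rho>. \<forall>v \<in> layer V adj C i.
        finite (nbrs_in V adj v (layer V adj C j)) \<and>
        card (nbrs_in V adj v (layer V adj C j)) = \<alpha> i j) \<and>
     (\<forall>i\<le>\<rho>. \<forall>j\<le>\<rho>. (i > j + 1 \<or> j > i + 1) \<longrightarrow> \<alpha> i j = 0)"

definition Zn :: "nat \<Rightarrow> int list set" where
  "Zn n = {x. length x = n}"

definition adjG :: "int list \<Rightarrow> int list \<Rightarrow> bool" where
  "adjG x y \<longleftrightarrow> length x = length y \<and> (\<Sum>i<length x. \<bar>x!i - y!i\<bar>) = 1"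

text \<open>{0,1}^m represented as bool lists of length m (True = 1).\<close>
definition Hvert :: "nat \<Rightarrow> bool list set" where
  "Hvert m = {x. length x = m}"

definition adjH :: "bool list \<Rightarrow> bool list \<Rightarrow> bool" where
  "adjH x y \<longleftrightarrow> length x = length y \<and> card {i. i < length x \<and> x!i \<noteq> y!i} = 1"

definition tau :: "int \<Rightarrow> bool list" where
  "tau a = (if a = 0 then [False, False] else if a = 1 then [True, False]
            else if a = 2 then [True, True] else [False, True])"

definition gray :: "int list \<Rightarrow> bool list" where
  "gray x = concat (map (\<lambda>a. tau (a mod 4)) x)"

end

theory Submission
  imports Defs
begin

lemma relpow_V: "(adjV V adj ^^ k) x y \<Longrightarrow> x \<in> V \<Longrightarrow> y \<in> V"
  by (induction k arbitrary: y) (auto simp: adjV_def)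

lemma walk_proj:
  assumes P2: "\<And>x y. adjV V adj x y \<Longrightarrow> adjV V' adj' (\<pi> x) (\<pi> y)"
  shows "(adjV V adj ^^ k) x y \<Longrightarrow> (adjV V' adj' ^^ k) (\<pi> x) (\<pi> y)"
proof (induction k arbitrary: y)
  case 0 thus ?case by simp
next
  case (Suc k)
  then obtain m where "(adjV V adj ^^ k) x m" "adjV V adj m y" by auto
  thus ?case using Suc.IH P2 by (meson relpowp_Suc_I)
qed

lemma walk_lift:
  assumes P3: "\<And>x h. x \<in> V \<Longrightarrow> adjV V' adj' (\<pi> x) h \<Longrightarrow> \<exists>y. adjV V adj x y \<and> \<pi> y = h"
  shows "x \<in> V \<Longrightarrow> (adjV V' adj' ^^ k) (\<pi> x) h \<Longrightarrow> \<exists>y. (adjV V adj ^^ k) x y \<and> \<pi> y = h"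
proof (induction k arbitrary: h)
  case 0 thus ?case by auto
next
  case (Suc k)
  from Suc.prems(2) obtain m where m: "(adjV V' adj' ^^ k) (\<pi> x) m" "adjV V' adj' m h" by auto
  from Suc.IH[OF Suc.prems(1) m(1)] obtain y where y: "(adjV V adj ^^ k) x y" "\<pi> y = m" by auto
  have "y \<in> V" using relpow_V[OF y(1) Suc.prems(1)] .
  from P3[OF this] m(2) y(2) obtain z where "adjV V adj y z" "\<pi> z = h" by auto
  thus ?case using y(1) by (auto intro: relpowp_Suc_I)
qed

lemma cover_CRC:
  assumes crc: "CRC V adj C \<rho> \<alpha>"
    and piV: "\<And>x. x \<in> V \<Longrightarrow> \<pi> x \<in> V'"
    and surj: "\<And>h. h \<in> V' \<Longrightarrow> \<exists>x\<in>V. \<pi> x = h"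
    and P2: "\<And>x y. adjV V adj x y \<Longrightarrow> adjV V' adj' (\<pi> x) (\<pi> y)"
    and P3: "\<And>x h. x \<in> V \<Longrightarrow> adjV V' adj' (\<pi> x) h \<Longrightarrow> \<exists>y. adjV V adj x y \<and> \<pi> y = h"
    and inj: "\<And>x y y'. adjV V adj x y \<Longrightarrow> adjV V adj x y' \<Longrightarrow> \<pi> y = \<pi> y' \<Longrightarrow> y = y'"
    and CD: "C = {x \<in> V. \<pi> x \<in> D}"
    and DV: "D = \<pi> ` C"
  shows "CRC V' adj' D \<rho> \<alpha>"
proof -
  have ex: "(\<exists>c\<in>C. (adjV V adj ^^ k) x c) \<longleftrightarrow> (\<exists>d\<in>D. (adjV V' adj' ^^ k) (\<pi> x) d)" if "x \<in> V" for x k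
  proof
    assume "\<exists>c\<in>C. (adjV V adj ^^ k) x c"
    then obtain c where "c \<in> C" "(adjV V adj ^^ k) x c" by auto
    then show "\<exists>d\<in>D. (adjV V' adj' ^^ k) (\<pi> x) d" using walk_proj[of V adj V' adj' \<pi>, OF P2] DV by blast
  next
    assume "\<exists>d\<in>D. (adjV V' adj' ^^ k) (\<pi> x) d"
    then obtain d where d: "d \<in> D" "(adjV V' adj' ^^ k) (\<pi> x) d" by auto
    from walk_lift[of V V' adj' \<pi> adj, OF P3 that d(2)] obtain y where y: "(adjV V adj ^^ k) x y" "\<pi> y = d" by auto
    have "y \<in> V" using relpow_V[OF y(1) that] .
    with y d CD show "\<exists>c\<in>C. (adjV V adj ^^ k) x c" by auto
  qed
  have dist: "dist_code V' adj' D (\<pi> x) = dist_code V adj C x" if "x \<in> V" for x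
    unfolding dist_code_def using ex[OF that] by simp
  have lay: "\<pi> x \<in> layer V' adj' D i \<longleftrightarrow> x \<in> layer V adj C i" if "x \<in> V" for x i
    using dist[OF that] piV[OF that] that by (auto simp: layer_def)
  have nb: "nbrs_in V' adj' (\<pi> x) (layer V' adj' D j) = \<pi> ` nbrs_in V adj x (layer V adj C j)" if "x \<in> V" for x j
  proof
    show "nbrs_in V' adj' (\<pi> x) (layer V' adj' D j) \<subseteq> \<pi> ` nbrs_in V adj x (layer V adj C j)"
    proof
      fix h assume "h \<in> nbrs_in V' adj' (\<pi> x) (layer V' adj' D j)"
      hence h: "adjV V' adj' (\<pi> x) h" "h \<in> layer V' adj' D j" by (auto simp: nbrs_in_def)
      from P3[OF that h(1)] obtain y where y: "adjV V adj x y" "\<pi> y = h" by auto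
      have yV: "y \<in> V" using y(1) by (simp add: adjV_def)
      with h(2) y lay have "y \<in> layer V adj C j" by auto
      with y yV show "h \<in> \<pi> ` nbrs_in V adj x (layer V adj C j)" by (auto simp: nbrs_in_def)
    qed
  next
    show "\<pi> ` nbrs_in V adj x (layer V adj C j) \<subseteq> nbrs_in V' adj' (\<pi> x) (layer V' adj' D j)"
    proof
      fix h assume "h \<in> \<pi> ` nbrs_in V adj x (layer V adj C j)"
      then obtain y where y: "y \<in> V" "adjV V adj x y" "y \<in> layer V adj C j" "h = \<pi> y"
        by (auto simp: nbrs_in_def)
      have "adjV V' adj' (\<pi> x) h" using P2[OF y(2)] y(4) by simp
      moreover have "h \<in> layer V' adj' D j" using lay[OF y(1)] y by simp
      ultimately show "h \<in> nbrs_in V' adj' (\<pi> x) (layer V' adj' D j)"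
        using piV[OF y(1)] y(4) by (simp add: nbrs_in_def)
    qed
  qed
  have injn: "inj_on \<pi> (nbrs_in V adj x S)" for x S
    by (rule inj_onI) (auto simp: nbrs_in_def intro: inj)
  from crc have CV: "C \<subseteq> V" and Cne: "C \<noteq> {}" and cr: "covering_radius_is V adj C \<rho>"
    and reg: "\<forall>i\<le>\<rho>. \<forall>j\<le>\<rho>. \<forall>v \<in> layer V adj C i.
        finite (nbrs_in V adj v (layer V adj C j)) \<and>
        card (nbrs_in V adj v (layer V adj C j)) = \<alpha> i j"
    and z: "\<forall>i\<le>\<rho>. \<forall>j\<le>\<rho>. (i > j + 1 \<or> j > i + 1) \<longrightarrow> \<alpha> i j = 0"
    unfolding CRC_def by auto
  have "D \<subseteq> V'" using DV CV piV by auto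
  moreover have "D \<noteq> {}" using DV Cne by auto
  moreover have "covering_radius_is V' adj' D \<rho>"
    unfolding covering_radius_is_def
  proof (rule conjI; (intro ballI)?)
    fix h assume "h \<in> V'"
    then obtain x where x: "x \<in> V" "\<pi> x = h" using surj by blast
    show "(\<exists>k. \<exists>c\<in>D. (adjV V' adj' ^^ k) h c) \<and> dist_code V' adj' D h \<le> \<rho>"
    proof -
      have "(\<exists>k. \<exists>c\<in>C. (adjV V adj ^^ k) x c) \<and> dist_code V adj C x \<le> \<rho>"
        using cr x(1) unfolding covering_radius_is_def by blast
      thus ?thesis using ex[OF x(1)] dist[OF x(1)] x(2) by auto
    qed
  next
    from cr obtain v where "v \<in> V" "dist_code V adj C v = \<rho>" unfolding covering_radius_is_def by auto
    thus "\<exists>v\<in>V'. dist_code V' adj' D v = \<rho>" using dist piV by metis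
  qed
  moreover have "\<forall>i\<le>\<rho>. \<forall>j\<le>\<rho>. \<forall>v \<in> layer V' adj' D i.
        finite (nbrs_in V' adj' v (layer V' adj' D j)) \<and>
        card (nbrs_in V' adj' v (layer V' adj' D j)) = \<alpha> i j"
  proof (intro allI impI ballI)
    fix i j v assume ij: "i \<le> \<rho>" "j \<le> \<rho>" and v: "v \<in> layer V' adj' D i"
    hence "v \<in> V'" by (simp add: layer_def)
    then obtain x where x: "x \<in> V" "\<pi> x = v" using surj by blast
    have xl: "x \<in> layer V adj C i" using lay[OF x(1)] x v by simp
    show "finite (nbrs_in V' adj' v (layer V' adj' D j)) \<and>
        card (nbrs_in V' adj' v (layer V' adj' D j)) = \<alpha> i j"
      using reg ij xl nb[OF x(1)] x(2) card_image[OF injn] by auto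
  qed
  ultimately show ?thesis using z unfolding CRC_def by blast
qed


lemma adjV_sym:
  assumes "symp adj"
  shows "adjV V adj x y \<Longrightarrow> adjV V adj y x"
  using assms by (auto simp: adjV_def dest: sympD)

lemma layer0:
  assumes "covering_radius_is V adj C \<rho>" "C \<subseteq> V"
  shows "layer V adj C 0 = C"
proof -
  have "v \<in> C" if "v \<in> V" "dist_code V adj C v = 0" for v
  proof -
    from assms(1) that(1) obtain k c where "c \<in> C" "(adjV V adj ^^ k) v c"
      unfolding covering_radius_is_def by blast
    hence "\<exists>k. \<exists>c\<in>C. (adjV V adj ^^ k) v c" by blast
    hence "\<exists>c\<in>C. (adjV V adj ^^ (dist_code V adj C v)) v c"
      unfolding dist_code_def by (rule LeastI_ex)
    thus ?thesis using that by auto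
  qed
  moreover have "dist_code V adj C v = 0" if "v \<in> C" for v
    unfolding dist_code_def using that by (intro Least_eq_0) auto
  ultimately show ?thesis using assms(2) by (auto simp: layer_def)
qed

lemma dist_le:
  assumes "covering_radius_is V adj C \<rho>" "symp adj"
    and "adjV V adj v w"
  shows "dist_code V adj C w \<le> dist_code V adj C v + 1"
proof -
  have vV: "v \<in> V" using assms(3) by (simp add: adjV_def)
  from assms(1) vV obtain k c where "c \<in> C" "(adjV V adj ^^ k) v c"
    unfolding covering_radius_is_def by blast
  hence "\<exists>k. \<exists>c\<in>C. (adjV V adj ^^ k) v c" by blast
  hence "\<exists>c\<in>C. (adjV V adj ^^ (dist_code V adj C v)) v c"
    unfolding dist_code_def by (rule LeastI_ex)
  then obtain c where c: "c \<in> C" "(adjV V adj ^^ (dist_code V adj C v)) v c" by blast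
  have "adjV V adj w v" using adjV_sym[OF assms(2) assms(3)] .
  hence "(adjV V adj ^^ Suc (dist_code V adj C v)) w c" using c(2) by (rule relpowp_Suc_I2)
  hence "dist_code V adj C w \<le> Suc (dist_code V adj C v)"
    unfolding dist_code_def using c(1) by (intro Least_le) blast
  thus ?thesis by simp
qed

context
  fixes V adj C \<rho> \<alpha>
  assumes crc: "CRC V adj C \<rho> \<alpha>" and sym: "symp adj"
    and r2: "\<rho> \<ge> 2" and a00: "\<alpha> 0 0 = 0" and a11: "\<alpha> 1 1 = 0"
    and a10: "\<alpha> 1 0 = 1" and a21: "\<alpha> 2 1 = 2"
begin

lemma CV: "C \<subseteq> V" using crc by (simp add: CRC_def)
lemma cr: "covering_radius_is V adj C \<rho>" using crc by (simp add: CRC_def)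
lemma L0: "layer V adj C 0 = C" using layer0[OF cr CV] .
lemma d0: "v \<in> V \<Longrightarrow> dist_code V adj C v = 0 \<longleftrightarrow> v \<in> C"
proof -
  assume "v \<in> V"
  have "v \<in> layer V adj C 0 \<longleftrightarrow> v \<in> C" using L0 by simp
  thus ?thesis using \<open>v \<in> V\<close> unfolding layer_def by simp
qed

lemma reg: "i \<le> \<rho> \<Longrightarrow> j \<le> \<rho> \<Longrightarrow> v \<in> layer V adj C i \<Longrightarrow>
   finite (nbrs_in V adj v (layer V adj C j)) \<and> card (nbrs_in V adj v (layer V adj C j)) = \<alpha> i j"
  using crc by (simp add: CRC_def)

lemma F0:
  assumes "v \<in> C" "adjV V adj v w" shows "w \<in> layer V adj C 1"
proof -
  have vl: "v \<in> layer V adj C 0" using L0 assms(1) by simp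
  have "w \<notin> C"
  proof
    assume "w \<in> C"
    hence "w \<in> nbrs_in V adj v (layer V adj C 0)" using assms(2) L0 by (auto simp: nbrs_in_def adjV_def)
    moreover have "nbrs_in V adj v (layer V adj C 0) = {}" using reg[of 0 0 v] vl a00 by (simp add: card_eq_0_iff) blast
    ultimately show False by simp
  qed
  moreover have "dist_code V adj C w \<le> 1" using dist_le[OF cr sym assms(2)] vl by (simp add: layer_def)
  moreover have "w \<in> V" using assms(2) by (simp add: adjV_def)
  ultimately show ?thesis using d0[of w] by (auto simp: layer_def)
qed

lemma F1:
  assumes "v \<in> layer V adj C 1" "adjV V adj v w" "w \<notin> C" shows "w \<in> layer V adj C 2"
proof -
  have "w \<notin> layer V adj C 1"
  proof
    assume "w \<in> layer V adj C 1"
    hence "w \<in> nbrs_in V adj v (layer V adj C 1)" using assms(2) by (auto simp: nbrs_in_def adjV_def)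
    moreover have "nbrs_in V adj v (layer V adj C 1) = {}" using reg[of 1 1 v] assms(1) a11 r2 by (simp add: card_eq_0_iff) blast
    ultimately show False by simp
  qed
  moreover have "dist_code V adj C w \<le> 2" using dist_le[OF cr sym assms(2)] assms(1) by (simp add: layer_def)
  moreover have "w \<in> V" using assms(2) by (simp add: adjV_def)
  moreover have "dist_code V adj C w \<noteq> 0" using d0 assms(3) \<open>w \<in> V\<close> by auto
  ultimately show ?thesis by (auto simp: layer_def)
qed

lemma F1u:
  assumes "v \<in> layer V adj C 1" "adjV V adj v w" "adjV V adj v w'" "w \<in> C" "w' \<in> C"
  shows "w = w'"
proof -
  have "w \<in> nbrs_in V adj v (layer V adj C 0)" "w' \<in> nbrs_in V adj v (layer V adj C 0)"
    using assms L0 by (auto simp: nbrs_in_def adjV_def)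
  moreover have "card (nbrs_in V adj v (layer V adj C 0)) = 1" using reg[of 1 0 v] assms(1) a10 r2 by simp
  ultimately show ?thesis by (auto simp: card_Suc_eq)
qed

lemma F1e:
  assumes "v \<in> layer V adj C 1" shows "\<exists>w\<in>C. adjV V adj v w"
proof -
  have "card (nbrs_in V adj v (layer V adj C 0)) = 1" using reg[of 1 0 v] assms(1) a10 r2 by simp
  then obtain w where "w \<in> nbrs_in V adj v (layer V adj C 0)" by (auto simp: card_Suc_eq)
  thus ?thesis using L0 by (auto simp: nbrs_in_def)
qed

lemma F2:
  assumes "v \<in> layer V adj C 2" "adjV V adj v w1" "adjV V adj v w2" "adjV V adj v w3"
    "w1 \<in> layer V adj C 1" "w2 \<in> layer V adj C 1" "w3 \<in> layer V adj C 1"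
    "w1 \<noteq> w2" "w1 \<noteq> w3" "w2 \<noteq> w3"
  shows False
proof -
  let ?N = "nbrs_in V adj v (layer V adj C 1)"
  have fin: "finite ?N" and c: "card ?N = 2" using reg[of 2 1 v] assms(1) a21 r2 by auto
  have "{w1, w2, w3} \<subseteq> ?N" using assms by (auto simp: nbrs_in_def adjV_def)
  hence "card {w1, w2, w3} \<le> 2" using card_mono[OF fin] c by simp
  thus False using assms(8-10) by simp
qed

lemma F2e:
  assumes "v \<in> layer V adj C 2" "w \<in> layer V adj C 1" "adjV V adj v w"
  shows "\<exists>w'\<in>layer V adj C 1. adjV V adj v w' \<and> w' \<noteq> w"
proof -
  let ?N = "nbrs_in V adj v (layer V adj C 1)"
  have fin: "finite ?N" and c: "card ?N = 2" using reg[of 2 1 v] assms(1) a21 r2 by auto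
  have "w \<in> ?N" using assms by (auto simp: nbrs_in_def adjV_def)
  hence "card (?N - {w}) = 1" using c fin by simp
  then obtain w' where "w' \<in> ?N - {w}" by (auto simp: card_Suc_eq)
  thus ?thesis by (auto simp: nbrs_in_def)
qed

end


lemma adjG_sym: "adjG x y \<Longrightarrow> adjG y x"
proof -
  assume "adjG x y"
  hence A: "length x = length y" "(\<Sum>i<length x. \<bar>x!i - y!i\<bar>) = 1" by (auto simp: adjG_def)
  have "(\<Sum>i<length y. \<bar>y!i - x!i\<bar>) = (\<Sum>i<length x. \<bar>x!i - y!i\<bar>)" using A(1) by (simp add: abs_minus_commute)
  thus ?thesis using A by (simp add: adjG_def)
qed

lemma adjZ_step:
  assumes "x \<in> Zn n" "k < n" "t = 1 \<or> t = -1"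
  shows "adjV (Zn n) adjG x (x[k := x!k + t])"
proof -
  have l: "length x = n" using assms(1) by (simp add: Zn_def)
  have "(\<Sum>i<n. \<bar>x!i - x[k := x!k + t]!i\<bar>) = (\<Sum>i<n. if i = k then 1 else 0)"
    using assms(3) l by (intro sum.cong) (auto simp: nth_list_update)
  also have "\<dots> = 1" using assms(2) by simp
  finally show ?thesis using assms l by (simp add: adjV_def adjG_def Zn_def)
qed

lemma adjZ_cases:
  assumes "adjV (Zn n) adjG x y"
  shows "\<exists>k<n. \<exists>t. (t = 1 \<or> t = -1) \<and> y = x[k := x!k + t]"
proof -
  have l: "length x = n" "length y = n" using assms by (auto simp: adjV_def Zn_def)
  define f where "f i = \<bar>x!i - y!i\<bar>" for i
  have s: "sum f {..<n} = 1" using assms l by (simp add: adjV_def adjG_def f_def)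
  have f0: "\<And>i. f i \<ge> 0" by (simp add: f_def)
  obtain k where k: "k < n" "f k \<noteq> 0"
  proof -
    have "\<not> (\<forall>i\<in>{..<n}. f i = 0)" using s by (metis sum.neutral zero_neq_one)
    thus ?thesis using that by auto
  qed
  have "f k \<le> sum f {..<n}" using k f0 by (intro member_le_sum) auto
  hence fk: "f k = 1" using s k f0[of k] by linarith
  have "sum f ({..<n} - {k}) = 0" using s fk k by (simp add: sum_diff1)
  hence oth: "\<forall>i\<in>{..<n} - {k}. f i = 0" using f0 by (subst sum_nonneg_eq_0_iff[symmetric]) auto
  define t where "t = y!k - x!k"
  have "t = 1 \<or> t = -1" using fk unfolding t_def f_def by linarith
  moreover have "y = x[k := x!k + t]"
  proof (rule nth_equalityI)
    show "length y = length (x[k := x ! k + t])" using l by simp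
    fix i assume "i < length y"
    thus "y ! i = x[k := x ! k + t] ! i" using oth l unfolding f_def t_def
      by (cases "i = k") (auto simp: nth_list_update)
  qed
  ultimately show ?thesis using k by blast
qed

lemma adjZ_bound:
  assumes "adjV (Zn n) adjG x y" "i < n"
  shows "\<bar>x!i - y!i\<bar> \<le> 1"
proof -
  have l: "length x = n" using assms(1) by (simp add: adjV_def Zn_def)
  obtain k t where "k < n" "t = 1 \<or> t = -1" "y = x[k := x!k + t]" using adjZ_cases[OF assms(1)] by blast
  thus ?thesis using l assms(2) by (cases "i = k") auto
qed

definition pt :: "int list \<Rightarrow> nat \<Rightarrow> nat \<Rightarrow> int \<Rightarrow> int \<Rightarrow> int \<Rightarrow> int \<Rightarrow> int list" where
  "pt c i j \<sigma> \<tau> a b = c[i := c!i + a*\<sigma>, j := c!j + b*\<tau>]"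

definition ln :: "int list \<Rightarrow> nat \<Rightarrow> int \<Rightarrow> int \<Rightarrow> int list" where
  "ln c i \<sigma> a = c[i := c!i + a*\<sigma>]"

lemma pt_len[simp]: "length (pt c i j \<sigma> \<tau> a b) = length c" by (simp add: pt_def)
lemma ln_len[simp]: "length (ln c i \<sigma> a) = length c" by (simp add: ln_def)

context
  fixes c :: "int list" and i j n :: nat and \<sigma> \<tau> :: int
  assumes l: "length c = n" and ij: "i < n" "j < n" "i \<noteq> j"
begin

lemma pt_nth: "k < n \<Longrightarrow> pt c i j \<sigma> \<tau> a b ! k = (if k = i then c!i + a*\<sigma> else if k = j then c!j + b*\<tau> else c!k)"
  using l ij by (auto simp: pt_def nth_list_update)

lemma pt_i: "(pt c i j \<sigma> \<tau> a b)[i := pt c i j \<sigma> \<tau> a b ! i + \<sigma>] = pt c i j \<sigma> \<tau> (a+1) b"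
  by (rule nth_equalityI) (use l ij in \<open>auto simp: pt_nth nth_list_update algebra_simps\<close>)

lemma pt_j: "(pt c i j \<sigma> \<tau> a b)[j := pt c i j \<sigma> \<tau> a b ! j + \<tau>] = pt c i j \<sigma> \<tau> a (b+1)"
  by (rule nth_equalityI) (use l ij in \<open>auto simp: pt_nth nth_list_update algebra_simps\<close>)

lemma ln_j: "(ln c i \<sigma> a)[j := ln c i \<sigma> a ! j + \<tau>] = pt c i j \<sigma> \<tau> a 1"
  by (rule nth_equalityI) (use l ij in \<open>auto simp: pt_nth ln_def nth_list_update algebra_simps\<close>)

lemma pt_00: "pt c i j \<sigma> \<tau> 0 0 = c"
  using l ij by (simp add: pt_def)

lemma pt_inj:
  assumes "\<sigma> \<noteq> 0" "\<tau> \<noteq> 0" "pt c i j \<sigma> \<tau> a b = pt c i j \<sigma> \<tau> a' b'"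
  shows "a = a' \<and> b = b'"
proof -
  have "pt c i j \<sigma> \<tau> a b ! i = pt c i j \<sigma> \<tau> a' b' ! i" "pt c i j \<sigma> \<tau> a b ! j = pt c i j \<sigma> \<tau> a' b' ! j"
    using assms by auto
  thus ?thesis using ij assms(1,2) by (auto simp: pt_nth)
qed

end

lemma ln_i: "i < length c \<Longrightarrow> (ln c i \<sigma> a)[i := ln c i \<sigma> a ! i + t] = c[i := c!i + a*\<sigma> + t]"
  by (simp add: ln_def)

lemma ln_0: "ln c i \<sigma> 0 = c" by (simp add: ln_def)

lemma ln_inj: "i < length c \<Longrightarrow> \<sigma> \<noteq> 0 \<Longrightarrow> ln c i \<sigma> a = ln c i \<sigma> a' \<Longrightarrow> a = a'"
  by (metis ln_def nth_list_update_eq add_left_cancel mult_cancel_right)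


lemma adjG_symp: "symp adjG" by (auto intro: sympI adjG_sym)

context
  fixes n :: nat and C :: "int list set" and \<rho> :: nat and \<alpha> :: "nat \<Rightarrow> nat \<Rightarrow> nat"
  assumes crc: "CRC (Zn n) adjG C \<rho> \<alpha>"
    and r2: "\<rho> \<ge> 2"
    and a00: "\<alpha> 0 0 = 0" and a11: "\<alpha> 1 1 = 0"
    and a10: "\<alpha> 1 0 = 1" and a21: "\<alpha> 2 1 = 2"
begin

abbreviation "LL k \<equiv> layer (Zn n) adjG C k"
abbreviation "RR \<equiv> adjV (Zn n) adjG"

lemmas G0 = F0[where V="Zn n" and adj=adjG and C=C and \<rho>=\<rho> and \<alpha>=\<alpha>, OF crc adjG_symp r2 a00 a11 a10 a21]
lemmas G1 = F1[where V="Zn n" and adj=adjG and C=C and \<rho>=\<rho> and \<alpha>=\<alpha>, OF crc adjG_symp r2 a00 a11 a10 a21]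
lemmas G1u = F1u[where V="Zn n" and adj=adjG and C=C and \<rho>=\<rho> and \<alpha>=\<alpha>, OF crc adjG_symp r2 a00 a11 a10 a21]
lemmas G1e = F1e[where V="Zn n" and adj=adjG and C=C and \<rho>=\<rho> and \<alpha>=\<alpha>, OF crc adjG_symp r2 a00 a11 a10 a21]
lemmas G2 = F2[where V="Zn n" and adj=adjG and C=C and \<rho>=\<rho> and \<alpha>=\<alpha>, OF crc adjG_symp r2 a00 a11 a10 a21]
lemmas G2e = F2e[where V="Zn n" and adj=adjG and C=C and \<rho>=\<rho> and \<alpha>=\<alpha>, OF crc adjG_symp r2 a00 a11 a10 a21]

lemma Rsym: "RR x y \<Longrightarrow> RR y x" by (auto simp: adjV_def dest: adjG_sym)

lemma CZ: "C \<subseteq> Zn n" using crc by (simp add: CRC_def)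

lemma K:
  assumes c: "c \<in> C" and ij: "i < n" "j < n" "i \<noteq> j"
    and s: "\<sigma> = 1 \<or> \<sigma> = -1" and t: "\<tau> = 1 \<or> \<tau> = -1"
  shows "pt c i j \<sigma> \<tau> 2 1 \<notin> LL 1"
proof
  assume H: "pt c i j \<sigma> \<tau> 2 1 \<in> LL 1"
  have l: "length c = n" using c CZ by (auto simp: Zn_def)
  have pZ: "pt c i j \<sigma> \<tau> a b \<in> Zn n" for a b using l by (simp add: Zn_def)
  have Ri: "RR (pt c i j \<sigma> \<tau> a b) (pt c i j \<sigma> \<tau> (a+1) b)" for a b
    using adjZ_step[OF pZ ij(1) s, of a b] pt_i[OF l ij] by simp
  have Rj: "RR (pt c i j \<sigma> \<tau> a b) (pt c i j \<sigma> \<tau> a (b+1))" for a b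
    using adjZ_step[OF pZ ij(2) t, of a b] pt_j[OF l ij] by simp
  have p00: "pt c i j \<sigma> \<tau> 0 0 = c" using pt_00[OF l ij] .
  have sn: "\<sigma> \<noteq> 0" "\<tau> \<noteq> 0" using s t by auto
  have inj: "pt c i j \<sigma> \<tau> a b = pt c i j \<sigma> \<tau> a' b' \<Longrightarrow> a = a' \<and> b = b'" for a b a' b'
    by (rule pt_inj[OF l ij sn])
  have ne: "pt c i j \<sigma> \<tau> a b \<noteq> pt c i j \<sigma> \<tau> a' b'" if "a \<noteq> a' \<or> b \<noteq> b'" for a b a' b'
    using inj that by blast
  have R0010: "RR c (pt c i j \<sigma> \<tau> 1 0)" using Ri[of 0 0] p00 by simp
  have R0001: "RR c (pt c i j \<sigma> \<tau> 0 1)" using Rj[of 0 0] p00 by simp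
  have R1011: "RR (pt c i j \<sigma> \<tau> 1 0) (pt c i j \<sigma> \<tau> 1 1)" using Rj[of 1 0] by simp
  have R0111: "RR (pt c i j \<sigma> \<tau> 0 1) (pt c i j \<sigma> \<tau> 1 1)" using Ri[of 0 1] by simp
  have R1121: "RR (pt c i j \<sigma> \<tau> 1 1) (pt c i j \<sigma> \<tau> 2 1)" using Ri[of 1 1] by simp
  have p10: "pt c i j \<sigma> \<tau> 1 0 \<in> LL 1" using G0[OF c R0010] .
  have p01: "pt c i j \<sigma> \<tau> 0 1 \<in> LL 1" using G0[OF c R0001] .
  have n11: "pt c i j \<sigma> \<tau> 1 1 \<notin> C"
  proof
    assume "pt c i j \<sigma> \<tau> 1 1 \<in> C"
    from G1u[OF p10 Rsym[OF R0010] R1011 c this] have "pt c i j \<sigma> \<tau> 0 0 = pt c i j \<sigma> \<tau> 1 1"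
      using p00 by simp
    thus False using ne[of 0 1 0 1] by simp
  qed
  have p11: "pt c i j \<sigma> \<tau> 1 1 \<in> LL 2" using G1[OF p10 R1011 n11] .
  show False
    using G2[OF p11 Rsym[OF R1011] Rsym[OF R0111] R1121 p10 p01 H ne ne ne] by simp
qed

lemma shift4:
  assumes c: "c \<in> C" and i: "i < n" and s: "\<sigma> = 1 \<or> \<sigma> = -1"
  shows "c[i := c!i + 4*\<sigma>] \<in> C"
proof -
  have l: "length c = n" using c CZ by (auto simp: Zn_def)
  have qZ: "ln c i \<sigma> a \<in> Zn n" for a using l by (simp add: Zn_def)
  have Rq: "RR (ln c i \<sigma> a) (ln c i \<sigma> (a+1))" for a
    using adjZ_step[OF qZ i s, of a] ln_i[of i c \<sigma> a \<sigma>] l i by (simp add: ln_def algebra_simps)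
  have cls: "w = ln c i \<sigma> (a+1) \<or> w = ln c i \<sigma> (a-1) \<or>
       (\<exists>k t. k < n \<and> k \<noteq> i \<and> (t = 1 \<or> t = -1) \<and> w = pt c i k \<sigma> t a 1)"
    if RW: "RR (ln c i \<sigma> a) w" for a w
  proof -
    obtain k t where kt: "k < n" "t = 1 \<or> t = -1" "w = (ln c i \<sigma> a)[k := ln c i \<sigma> a ! k + t]"
      using adjZ_cases[OF RW] by blast
    show ?thesis
    proof (cases "k = i")
      case True
      hence "w = c[i := c!i + a*\<sigma> + t]" using kt ln_i[of i c \<sigma> a t] l i by simp
      moreover have "t = \<sigma> \<or> t = -\<sigma>" using s kt(2) by auto
      ultimately have "w = ln c i \<sigma> (a+1) \<or> w = ln c i \<sigma> (a-1)" by (auto simp: ln_def algebra_simps)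
      thus ?thesis by blast
    next
      case False
      have "w = pt c i k \<sigma> t a 1" using kt(3) ln_j[OF l i kt(1) False[symmetric], of \<sigma> a t] by simp
      thus ?thesis using kt(1,2) False by blast
    qed
  qed
  have q0: "ln c i \<sigma> 0 = c" by (rule ln_0)
  have inj: "ln c i \<sigma> a = ln c i \<sigma> a' \<Longrightarrow> a = a'" for a a'
    using ln_inj[of i c \<sigma> a a'] l i s by fastforce
  have R01: "RR c (ln c i \<sigma> 1)" using Rq[of 0] q0 by simp
  have R12: "RR (ln c i \<sigma> 1) (ln c i \<sigma> 2)" using Rq[of 1] by simp
  have R23: "RR (ln c i \<sigma> 2) (ln c i \<sigma> 3)" using Rq[of 2] by simp
  have q1: "ln c i \<sigma> 1 \<in> LL 1" using G0[OF c R01] .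
  have n2: "ln c i \<sigma> 2 \<notin> C"
  proof
    assume "ln c i \<sigma> 2 \<in> C"
    from G1u[OF q1 Rsym[OF R01] R12 c this] have "ln c i \<sigma> 0 = ln c i \<sigma> 2" using q0 by simp
    thus False using inj[of 0 2] by simp
  qed
  have q2: "ln c i \<sigma> 2 \<in> LL 2" using G1[OF q1 R12 n2] .
  obtain w where w: "w \<in> LL 1" "RR (ln c i \<sigma> 2) w" "w \<noteq> ln c i \<sigma> 1"
    using G2e[OF q2 q1 Rsym[OF R12]] by blast
  have q3: "ln c i \<sigma> 3 \<in> LL 1"
  proof -
    from cls[OF w(2)] have "w = ln c i \<sigma> 3 \<or> w = ln c i \<sigma> 1 \<or>
       (\<exists>k t. k < n \<and> k \<noteq> i \<and> (t = 1 \<or> t = -1) \<and> w = pt c i k \<sigma> t 2 1)" by simp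
    thus ?thesis using w K[OF c i _ _ s] by blast
  qed
  obtain w' where w': "w' \<in> C" "RR (ln c i \<sigma> 3) w'" using G1e[OF q3] by blast
  from cls[OF w'(2)] have "w' = ln c i \<sigma> 4 \<or> w' = ln c i \<sigma> 2 \<or>
       (\<exists>k t. k < n \<and> k \<noteq> i \<and> (t = 1 \<or> t = -1) \<and> w' = pt c i k \<sigma> t 3 1)" by simp
  moreover have False if "k < n" "k \<noteq> i" "t = 1 \<or> t = -1" "w' = pt c i k \<sigma> t 3 1" for k t
  proof -
    have "RR (pt c i k \<sigma> t 2 1) (pt c i k \<sigma> t 3 1)"
      using adjZ_step[of "pt c i k \<sigma> t 2 1" n i \<sigma>] pt_i[OF l i that(1) that(2)[symmetric], of \<sigma> t 2 1] l i s
      by (simp add: Zn_def)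
    hence "pt c i k \<sigma> t 2 1 \<in> LL 1" using G0[OF w'(1)] Rsym that(4) by blast
    thus False using K[OF c i that(1) that(2)[symmetric] s that(3)] by blast
  qed
  ultimately have "w' = ln c i \<sigma> 4" using w'(1) n2 by blast
  thus ?thesis using w'(1) by (simp add: ln_def)
qed

end


lemma gray_Nil[simp]: "gray [] = []" by (simp add: gray_def)
lemma gray_Cons[simp]: "gray (a # x) = tau (a mod 4) @ gray x" by (simp add: gray_def)
lemma len_tau[simp]: "length (tau a) = 2" by (simp add: tau_def)
lemma len_gray[simp]: "length (gray x) = 2 * length x" by (induction x) auto

lemma nth_gray: "k < 2 * length x \<Longrightarrow> gray x ! k = tau (x!(k div 2) mod 4) ! (k mod 2)"
proof (induction x arbitrary: k)
  case Nil thus ?case by simp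
next
  case (Cons a x)
  show ?case
  proof (cases "k < 2")
    case True
    thus ?thesis by (auto simp: nth_append)
  next
    case False
    hence "gray (a # x) ! k = gray x ! (k - 2)" by (simp add: nth_append)
    also have "\<dots> = tau (x!((k-2) div 2) mod 4) ! ((k-2) mod 2)" using Cons False by simp
    also have "(k-2) div 2 = k div 2 - 1" "(k - 2) mod 2 = k mod 2" using False by (auto simp: div_if mod_if)
    moreover have "(a # x) ! (k div 2) = x ! (k div 2 - 1)" using False by (cases "k div 2") auto
    ultimately show ?thesis by simp
  qed
qed

lemma mod4_cases: "(a::int) mod 4 = 0 \<or> a mod 4 = 1 \<or> a mod 4 = 2 \<or> a mod 4 = 3" by presburger

lemma tau_inj:
  assumes "r \<in> {0,1,2,3}" "s \<in> {0,1,2,3}" "tau r ! 0 = tau s ! 0" "tau r ! 1 = tau s ! 1"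
  shows "r = s"
  using assms by (auto simp: tau_def)

lemma gray_eq_iff:
  assumes "length x = length y"
  shows "gray x = gray y \<longleftrightarrow> (\<forall>i<length x. x!i mod 4 = y!i mod 4)"
proof
  assume g: "gray x = gray y"
  show "\<forall>i<length x. x!i mod 4 = y!i mod 4"
  proof (intro allI impI)
    fix i assume i: "i < length x"
    have "gray x ! (2*i) = gray y ! (2*i)" "gray x ! (2*i+1) = gray y ! (2*i+1)" using g by auto
    hence e: "tau (x!i mod 4) ! 0 = tau (y!i mod 4) ! 0" "tau (x!i mod 4) ! 1 = tau (y!i mod 4) ! 1"
      using i assms by (auto simp: nth_gray)
    have m: "x!i mod 4 \<in> {0,1,2,3}" "y!i mod 4 \<in> {0,1,2,3}"
      using mod4_cases[of "x!i"] mod4_cases[of "y!i"] by auto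
    show "x!i mod 4 = y!i mod 4" by (rule tau_inj[OF m e])
  qed
next
  assume "\<forall>i<length x. x!i mod 4 = y!i mod 4"
  thus "gray x = gray y" using assms
    by (intro nth_equalityI) (auto simp: nth_gray less_mult_imp_div_less)
qed

lemma tau_step:
  assumes "m < 2" "t = 1 \<or> t = -1"
  shows "tau ((a + t) mod 4) ! m =
     (if m = (if (t = 1) = (a mod 2 = 0) then 0 else 1) then \<not> tau (a mod 4) ! m else tau (a mod 4) ! m)"
proof -
  have e1: "(a + t) mod 4 = (a mod 4 + t) mod 4" by (simp add: mod_add_left_eq)
  have e2: "a mod 2 = (a mod 4) mod 2" by (simp add: mod_mod_cancel)
  have m: "m = 0 \<or> m = 1" using assms(1) by auto
  show ?thesis unfolding e1 e2 using mod4_cases[of a] assms(2) m by (elim disjE) (simp_all add: tau_def)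
qed

lemma gray_flip:
  assumes j: "j < length x" and t: "t = 1 \<or> t = -1"
  defines "b \<equiv> (if (t = 1) = (x!j mod 2 = 0) then 0 else 1::nat)"
  shows "gray (x[j := x!j + t]) = (gray x)[2*j + b := \<not> gray x ! (2*j + b)]"
proof (rule nth_equalityI)
  show "length (gray (x[j := x!j + t])) = length ((gray x)[2*j + b := \<not> gray x ! (2*j + b)])" by simp
  fix k assume "k < length (gray (x[j := x!j + t]))"
  hence k: "k < 2 * length x" by simp
  have b2: "b < 2" by (simp add: b_def)
  show "gray (x[j := x!j + t]) ! k = (gray x)[2*j + b := \<not> gray x ! (2*j + b)] ! k"
  proof (cases "k div 2 = j")
    case True
    hence kk: "k = 2*j + k mod 2" by auto
    have "gray (x[j := x!j + t]) ! k = tau ((x!j + t) mod 4) ! (k mod 2)"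
      using k True j by (simp add: nth_gray)
    also have "\<dots> = (if k mod 2 = b then \<not> tau (x!j mod 4) ! (k mod 2) else tau (x!j mod 4) ! (k mod 2))"
      using tau_step[of "k mod 2" t "x!j"] t unfolding b_def by simp
    also have "\<dots> = (gray x)[2*j + b := \<not> gray x ! (2*j + b)] ! k"
    proof -
      have "2*j + b < 2 * length x" using j b2 by linarith
      moreover have "gray x ! (2*j+b) = tau (x!j mod 4) ! b" using j b2 by (subst nth_gray) auto
      ultimately show ?thesis using k True kk b2 by (subst nth_list_update) (auto simp: nth_gray)
    qed
    finally show ?thesis .
  next
    case False
    hence "k \<noteq> 2*j + b" using b2 by auto
    thus ?thesis using k False j by (simp add: nth_gray)
  qed
qed

lemma adjH_iff: "adjH u v \<longleftrightarrow> length u = length v \<and> (\<exists>k<length u. v = u[k := \<not> u!k])"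
proof
  assume a: "adjH u v"
  hence l: "length u = length v" and c: "card {i. i < length u \<and> u!i \<noteq> v!i} = 1" by (auto simp: adjH_def)
  from c obtain k where k: "{i. i < length u \<and> u!i \<noteq> v!i} = {k}" by (auto simp: card_Suc_eq)
  hence kl: "k < length u" "u!k \<noteq> v!k" and oth: "\<And>i. i < length u \<Longrightarrow> i \<noteq> k \<Longrightarrow> u!i = v!i" by blast+
  have "v = u[k := \<not> u!k]"
    by (rule nth_equalityI) (use l kl oth in \<open>auto simp: nth_list_update\<close>)
  thus "length u = length v \<and> (\<exists>k<length u. v = u[k := \<not> u!k])" using l kl by blast
next
  assume "length u = length v \<and> (\<exists>k<length u. v = u[k := \<not> u!k])"
  then obtain k where k: "k < length u" "v = u[k := \<not> u!k]" by blast
  have "{i. i < length u \<and> u!i \<noteq> v!i} = {k}" using k by (auto simp: nth_list_update)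
  thus "adjH u v" using k by (simp add: adjH_def)
qed

lemma grayP2:
  assumes "adjV (Zn n) adjG x y"
  shows "adjV (Hvert (2*n)) adjH (gray x) (gray y)"
proof -
  have l: "length x = n" "length y = n" using assms by (auto simp: adjV_def Zn_def)
  obtain j t where jt: "j < n" "t = 1 \<or> t = -1" "y = x[j := x!j + t]" using adjZ_cases[OF assms] by blast
  define b where "b = (if (t = 1) = (x!j mod 2 = 0) then 0 else 1::nat)"
  have "gray y = (gray x)[2*j + b := \<not> gray x ! (2*j + b)]" using gray_flip[of j x t] jt l unfolding b_def by simp
  moreover have "2*j + b < length (gray x)" using jt l by (simp add: b_def)
  ultimately have "adjH (gray x) (gray y)" by (auto simp: adjH_iff)
  thus ?thesis using l by (simp add: adjV_def Hvert_def)
qed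

lemma grayP3:
  assumes x: "x \<in> Zn n" and h: "adjV (Hvert (2*n)) adjH (gray x) h"
  shows "\<exists>y. adjV (Zn n) adjG x y \<and> gray y = h"
proof -
  have l: "length x = n" using x by (simp add: Zn_def)
  have "adjH (gray x) h" using h by (simp add: adjV_def)
  then obtain k where k0: "k < length (gray x)" "h = (gray x)[k := \<not> gray x ! k]"
    unfolding adjH_iff by blast
  hence k: "k < 2*n" "h = (gray x)[k := \<not> gray x ! k]" using l by auto
  define j where "j = k div 2"
  define t where "t = (if (k mod 2 = 0) = (x!j mod 2 = 0) then 1 else -1::int)"
  have j: "j < length x" using k l by (simp add: j_def)
  have t: "t = 1 \<or> t = -1" by (simp add: t_def)
  have "(if (t = 1) = (x!j mod 2 = 0) then 0 else 1::nat) = k mod 2" by (auto simp: t_def)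
  moreover have "2*j + k mod 2 = k" by (simp add: j_def)
  ultimately have "gray (x[j := x!j + t]) = h" using gray_flip[OF j t] k by simp
  moreover have "adjV (Zn n) adjG x (x[j := x!j + t])" using adjZ_step[OF x _ t] j l by simp
  ultimately show ?thesis by blast
qed

lemma close4:
  fixes a b c :: int
  assumes "a mod 4 = b mod 4" "\<bar>c - a\<bar> \<le> 1" "\<bar>c - b\<bar> \<le> 1"
  shows "a = b"
proof -
  have "4 dvd (a - b)" using assms(1) by (simp add: mod_eq_dvd_iff)
  then obtain q where q: "a - b = 4 * q" by (auto elim: dvdE)
  have "\<bar>a - b\<bar> \<le> 2" using assms(2,3) by linarith
  hence "q = 0" using q by presburger
  thus ?thesis using q by simp
qed

lemma grayInj:
  assumes "adjV (Zn n) adjG x y" "adjV (Zn n) adjG x y'" "gray y = gray y'"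
  shows "y = y'"
proof (rule nth_equalityI)
  have l: "length x = n" "length y = n" "length y' = n" using assms by (auto simp: adjV_def Zn_def)
  thus "length y = length y'" by simp
  fix i assume "i < length y"
  hence i: "i < n" using l by simp
  have m: "y!i mod 4 = y'!i mod 4" using gray_eq_iff[of y y'] assms(3) l i by simp
  have "\<bar>x!i - y!i\<bar> \<le> 1" "\<bar>x!i - y'!i\<bar> \<le> 1" using adjZ_bound assms(1,2) i by auto
  with m show "y!i = y'!i" by (rule close4)
qed

definition untau :: "bool \<Rightarrow> bool \<Rightarrow> int" where
  "untau b0 b1 = (if \<not> b0 \<and> \<not> b1 then 0 else if b0 \<and> \<not> b1 then 1 else if b0 \<and> b1 then 2 else 3)"

lemma untau: "tau (untau b0 b1 mod 4) ! 0 = b0" "tau (untau b0 b1 mod 4) ! 1 = b1"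
  by (auto simp: untau_def tau_def)

lemma graySurj:
  assumes "h \<in> Hvert (2*n)"
  shows "\<exists>x\<in>Zn n. gray x = h"
proof -
  have l: "length h = 2*n" using assms by (simp add: Hvert_def)
  define x where "x = map (\<lambda>j. untau (h!(2*j)) (h!(2*j+1))) [0..<n]"
  have "gray x = h"
  proof (rule nth_equalityI)
    show "length (gray x) = length h" using l by (simp add: x_def)
    fix k assume "k < length (gray x)"
    hence k: "k < 2*n" by (simp add: x_def)
    have "gray x ! k = tau (untau (h!(2*(k div 2))) (h!(2*(k div 2)+1)) mod 4) ! (k mod 2)"
      using k by (simp add: nth_gray x_def less_mult_imp_div_less)
    also have "\<dots> = h ! k"
    proof (cases "k mod 2 = 0")
      case True
      hence "2*(k div 2) = k" by auto
      thus ?thesis using True untau by simp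
    next
      case False
      hence m1: "k mod 2 = 1" by auto
      have "2*(k div 2) + 1 = k" using m1 div_mult_mod_eq[of k 2] by linarith
      thus ?thesis using untau m1 by simp
    qed
    finally show "gray x ! k = h ! k" .
  qed
  moreover have "x \<in> Zn n" by (simp add: x_def Zn_def)
  ultimately show ?thesis by blast
qed


theorem mainTheorem2:
  fixes n :: nat and C :: "int list set" and \<rho> :: nat and \<alpha> :: "nat \<Rightarrow> nat \<Rightarrow> nat"
  assumes "n \<ge> 1"
    and "CRC (Zn n) adjG C \<rho> \<alpha>"
    and "\<rho> \<ge> 2"
    and "\<alpha> 0 0 = 0" and "\<alpha> 1 1 = 0"
    and "\<alpha> 1 0 = 1" and "\<alpha> 2 1 = 2"
  shows "(\<exists>D. CRC (Hvert (2 * n)) adjH D \<rho> \<alpha> \<and> C = {x \<in> Zn n. gray x \<in> D}) \<and>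
         (\<forall>i<n. (\<lambda>x. x[i := x!i + 4]) ` C = C)"
proof -
  note S4 = shift4[OF assms(2) assms(3) assms(4-7)]
  have CZ: "C \<subseteq> Zn n" using assms(2) by (simp add: CRC_def)
  have lenC: "length c = n" if "c \<in> C" for c using CZ that by (auto simp: Zn_def)
  have shk: "\<forall>c\<in>C. c[i := c!i + 4*k] \<in> C" if i: "i < n" for i and k :: int
  proof (induct k rule: int_induct[where k=0])
    case base
    show ?case by simp
  next
    case (step1 m)
    show ?case
    proof
      fix c assume c: "c \<in> C"
      let ?c' = "c[i := c!i + 4*m]"
      have c': "?c' \<in> C" using step1 c by blast
      have "?c'[i := ?c'!i + 4*1] \<in> C" using S4[OF c' i, of 1] by simp
      moreover have "?c'[i := ?c'!i + 4*1] = c[i := c!i + 4*(m+1)]"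
        using lenC[OF c] i by (simp add: algebra_simps)
      ultimately show "c[i := c!i + 4*(m+1)] \<in> C" by simp
    qed
  next
    case (step2 m)
    show ?case
    proof
      fix c assume c: "c \<in> C"
      let ?c' = "c[i := c!i + 4*m]"
      have c': "?c' \<in> C" using step2 c by blast
      have "?c'[i := ?c'!i + 4*(-1)] \<in> C" using S4[OF c' i, of "-1"] by simp
      moreover have "?c'[i := ?c'!i + 4*(-1)] = c[i := c!i + 4*(m-1)]"
        using lenC[OF c] i by (simp add: algebra_simps)
      ultimately show "c[i := c!i + 4*(m-1)] \<in> C" by simp
    qed
  qed
  have inv: "x \<in> C" if x: "x \<in> Zn n" and c: "c \<in> C" and m4: "\<forall>i<n. x!i mod 4 = c!i mod 4" for x c
  proof -
    have lx: "length x = n" using x by (simp add: Zn_def)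
    have lc: "length c = n" using lenC[OF c] .
    define y where "y m = map (\<lambda>i. if i < m then x!i else c!i) [0..<n]" for m
    have "y m \<in> C" if "m \<le> n" for m
      using that
    proof (induction m)
      case 0
      have "y 0 = c" by (rule nth_equalityI) (auto simp: y_def lc)
      thus ?case using c by simp
    next
      case (Suc m)
      hence m: "m < n" by simp
      have ym: "y m \<in> C" using Suc by simp
      define k where "k = (x!m - c!m) div 4"
      have "4 dvd (x!m - c!m)" using m4 m by (simp add: mod_eq_dvd_iff)
      hence xk: "x!m = c!m + 4*k" unfolding k_def by auto
      have "y (Suc m) = (y m)[m := y m ! m + 4*k]"
        by (rule nth_equalityI) (auto simp: y_def nth_list_update xk m)
      thus ?case using shk[OF m, of k] ym by simp
    qed
    moreover have "y n = x" by (rule nth_equalityI) (auto simp: y_def lx)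
    ultimately show ?thesis by auto
  qed
  define D where "D = gray ` C"
  have CD: "C = {x \<in> Zn n. gray x \<in> D}"
  proof
    show "C \<subseteq> {x \<in> Zn n. gray x \<in> D}" using CZ by (auto simp: D_def)
  next
    show "{x \<in> Zn n. gray x \<in> D} \<subseteq> C"
    proof
      fix x assume "x \<in> {x \<in> Zn n. gray x \<in> D}"
      then obtain c where x: "x \<in> Zn n" and c: "c \<in> C" and g: "gray x = gray c" by (auto simp: D_def)
      have "length x = length c" using x lenC[OF c] by (simp add: Zn_def)
      hence "\<forall>i<n. x!i mod 4 = c!i mod 4" using gray_eq_iff[of x c] g x by (simp add: Zn_def)
      thus "x \<in> C" using inv[OF x c] by blast
    qed
  qed
  have "CRC (Hvert (2 * n)) adjH D \<rho> \<alpha>"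
  proof (rule cover_CRC[OF assms(2), where \<pi> = gray])
    show "\<And>x. x \<in> Zn n \<Longrightarrow> gray x \<in> Hvert (2 * n)" by (simp add: Zn_def Hvert_def)
    show "\<And>h. h \<in> Hvert (2 * n) \<Longrightarrow> \<exists>x\<in>Zn n. gray x = h" by (rule graySurj)
    show "\<And>x y. adjV (Zn n) adjG x y \<Longrightarrow> adjV (Hvert (2 * n)) adjH (gray x) (gray y)" by (rule grayP2)
    show "\<And>x h. x \<in> Zn n \<Longrightarrow> adjV (Hvert (2 * n)) adjH (gray x) h \<Longrightarrow> \<exists>y. adjV (Zn n) adjG x y \<and> gray y = h"
      by (rule grayP3)
    show "\<And>x y y'. adjV (Zn n) adjG x y \<Longrightarrow> adjV (Zn n) adjG x y' \<Longrightarrow> gray y = gray y' \<Longrightarrow> y = y'"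
      by (rule grayInj)
    show "C = {x \<in> Zn n. gray x \<in> D}" by (rule CD)
    show "D = gray ` C" by (simp add: D_def)
  qed
  moreover have "\<forall>i<n. (\<lambda>x. x[i := x!i + 4]) ` C = C"
  proof (intro allI impI)
    fix i assume i: "i < n"
    show "(\<lambda>x. x[i := x!i + 4]) ` C = C"
    proof
      show "(\<lambda>x. x[i := x!i + 4]) ` C \<subseteq> C" using S4[OF _ i, of _ 1] by auto
    next
      show "C \<subseteq> (\<lambda>x. x[i := x!i + 4]) ` C"
      proof
        fix x assume x: "x \<in> C"
        let ?y = "x[i := x!i + 4*(-1)]"
        have y: "?y \<in> C" using S4[OF x i, of "-1"] by simp
        have "?y[i := ?y!i + 4] = x" using lenC[OF x] i by simp
        thus "x \<in> (\<lambda>x. x[i := x!i + 4]) ` C" using y by force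
      qed
    qed
  qed
  ultimately show ?thesis using CD by blast
qed

end
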